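(* Let $\mathcal{Y}$ be a finite set of labels and let $\Omega$ be a countable set of model parameters (ensemble members) equipped with a probability distribution $p(\omega \mid \mathcal{D})$. For each $\omega \in \Omega$ and input $x$, let $p(y \mid x, \omega)$ be a probability distribution on $\mathcal{Y}$. Let $x_1, x_2$ be two inputs with corresponding label random variables $Y_1, Y_2$, and let $\delta \ge 0$ and $\epsilon \ge 0$. Suppose that $$I(Y_1; \omega \mid x_1, \mathcal{D}) > I(Y_2; \omega \mid x_2, \mathcal{D}) + \delta$$ and $$\left| H(Y_1 \mid x_1, \mathcal{D}) - H(Y_2 \mid x_2, \mathcal{D}) \right| \le \epsilon .$$ Then there exists a set $\Omega' \subseteq \Omega$ with $p(\Omega' \mid \mathcal{D}) > 0$ such that for every $\omega' \in \Omega'$, $$H(Y_1 \mid x_1, \omega') < H(Y_2 \mid x_2, \omega') - (\delta - \epsilon).$$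
   Context: The predictive distribution of the ensemble is $p(y \mid x, \mathcal{D}) = \mathbb{E}_{p(\omega \mid \mathcal{D})}[p(y \mid x, \omega)]$. $H(Y \mid x, \mathcal{D})$ denotes the Shannon entropy of $p(\cdot \mid x, \mathcal{D})$ (predictive entropy), and $H(Y \mid x, \omega)$ denotes the Shannon entropy of $p(\cdot \mid x, \omega)$ (softmax entropy of ensemble member $\omega$). The mutual information (epistemic uncertainty) is $I(Y; \omega \mid x, \mathcal{D}) = H(Y \mid x, \mathcal{D}) - \mathbb{E}_{p(\omega \mid \mathcal{D})}[H(Y \mid x, \omega)]$. *)

theory Defs
  imports "HOL-Probability.Probability"
begin

definition shannon_entropy :: "'y::finite pmf \<Rightarrow> real" where
  "shannon_entropy p = - (\<Sum>y\<in>UNIV. if pmf p y = 0 then 0 else pmf p y * ln (pmf p y))"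

text \<open>Predictive distribution p(y | x, D) = E_{p(omega|D)} [p(y | x, omega)]:
  the mixture of the members' distributions under the posterior P.\<close>
definition predictive :: "'w pmf \<Rightarrow> ('x \<Rightarrow> 'w \<Rightarrow> 'y pmf) \<Rightarrow> 'x \<Rightarrow> 'y pmf" where
  "predictive P m x = bind_pmf P (\<lambda>w. m x w)"

definition pred_entropy :: "'w pmf \<Rightarrow> ('x \<Rightarrow> 'w \<Rightarrow> 'y::finite pmf) \<Rightarrow> 'x \<Rightarrow> real" where
  "pred_entropy P m x = shannon_entropy (predictive P m x)"

definition mutual_info :: "'w pmf \<Rightarrow> ('x \<Rightarrow> 'w \<Rightarrow> 'y::finite pmf) \<Rightarrow> 'x \<Rightarrow> real" where
  "mutual_info P m x =
     pred_entropy P m x - measure_pmf.expectation P (\<lambda>w. shannon_entropy (m x w))"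

end

theory Submission
  imports Defs
begin

lemma ent_bound: "\<bar>shannon_entropy (p::'y::finite pmf)\<bar> \<le> real CARD('y)"
proof -
  have t: "\<bar>(if pmf p y = 0 then 0 else pmf p y * ln (pmf p y))\<bar> \<le> 1" for y
  proof (cases "pmf p y = 0")
    case False
    then have pos: "pmf p y > 0" using pmf_nonneg[of p y] by linarith
    have le1: "pmf p y \<le> 1" by (rule pmf_le_1)
    have "ln (pmf p y) \<le> 0" using pos le1 by simp
    hence a: "pmf p y * ln (pmf p y) \<le> 0" using pos by (simp add: mult_nonneg_nonpos)
    have "ln (pmf p y) \<ge> 1 - 1 / pmf p y"
      using ln_le_minus_one[of "1 / pmf p y"] pos by (simp add: ln_div)
    hence "pmf p y * ln (pmf p y) \<ge> pmf p y * (1 - 1 / pmf p y)" using pos by (simp add: mult_left_mono)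
    also have "pmf p y * (1 - 1 / pmf p y) = pmf p y - 1" using pos by (simp add: field_simps)
    finally show ?thesis using a pos by auto
  qed simp
  have "\<bar>shannon_entropy p\<bar> \<le> (\<Sum>y\<in>UNIV. \<bar>(if pmf p y = 0 then 0 else pmf p y * ln (pmf p y))\<bar>)"
    unfolding shannon_entropy_def abs_minus_cancel by (rule sum_abs)
  also have "\<dots> \<le> (\<Sum>y\<in>(UNIV::'y set). 1)" by (rule sum_mono) (rule t)
  finally show ?thesis by simp
qed

lemma ent_int: "integrable (measure_pmf P) (\<lambda>w. shannon_entropy (f w :: 'y::finite pmf))"
  by (rule measure_pmf.integrable_const_bound[where B="real CARD('y)"]) (auto intro: ent_bound)

theorem mainTheorem1:
  fixes P :: "'w::countable pmf"
    and m :: "'x \<Rightarrow> 'w \<Rightarrow> 'y::finite pmf"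
    and x1 x2 :: 'x
    and \<delta> \<epsilon> :: real
  assumes "\<delta> \<ge> 0" and "\<epsilon> \<ge> 0"
    and "mutual_info P m x1 > mutual_info P m x2 + \<delta>"
    and "\<bar>pred_entropy P m x1 - pred_entropy P m x2\<bar> \<le> \<epsilon>"
  shows "\<exists>\<Omega>'. measure_pmf.prob P \<Omega>' > 0 \<and>
           (\<forall>w'\<in>\<Omega>'. shannon_entropy (m x1 w') < shannon_entropy (m x2 w') - (\<delta> - \<epsilon>))"
proof (rule ccontr)
  define S where "S = {w'. shannon_entropy (m x1 w') < shannon_entropy (m x2 w') - (\<delta> - \<epsilon>)}"
  assume "\<not> ?thesis"
  hence "\<not> measure_pmf.prob P S > 0" unfolding S_def by auto
  hence "measure_pmf.prob P S = 0" by (simp add: measure_nonneg not_less order.antisym)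
  hence dis: "set_pmf P \<inter> S = {}" by (simp add: measure_pmf_zero_iff)
  let ?E1 = "measure_pmf.expectation P (\<lambda>w. shannon_entropy (m x1 w))"
  let ?E2 = "measure_pmf.expectation P (\<lambda>w. shannon_entropy (m x2 w))"
  have "measure_pmf.expectation P (\<lambda>w. shannon_entropy (m x2 w) - shannon_entropy (m x1 w))
        \<le> measure_pmf.expectation P (\<lambda>w. \<delta> - \<epsilon>)"
    apply (rule integral_mono_AE)
      apply (intro Bochner_Integration.integrable_diff ent_int)
     apply simp
    using dis unfolding S_def by (auto simp: AE_measure_pmf_iff)
  hence "?E2 - ?E1 \<le> \<delta> - \<epsilon>"
    by (simp add: Bochner_Integration.integral_diff[OF ent_int ent_int])
  thus False using assms unfolding mutual_info_def by linarith
qed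

end
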